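(* Let $\mathcal{Y}$ be finite (with the discrete topology) and let $\Gamma\colon\Delta(\mathcal{Y})\to2^{\mathcal{V}}$ be a property identified by $\nu$. For every $\gamma\in\mathcal{V}$ with $\Gamma^{-1}(\gamma)\ne\emptyset$, $$\{g\in C(\mathcal{Y}):g\le\alpha\nu_\gamma\text{ for some }\alpha\in\mathbb{R}\}=\mathcal{G}_{\Gamma^{-1}(\gamma)},$$ i.e. no closure is needed.
   Context: For finite $\mathcal{Y}$, $C(\mathcal{Y})\cong\mathbb{R}^{\mathcal{Y}}$ with coordinatewise order, $\Delta(\mathcal{Y})$ is the probability simplex, $\mathbb{E}_\phi[f]=\sum_y\phi(y)f(y)$. Level set: $\Gamma^{-1}(\gamma)=\{\phi\in\Delta(\mathcal{Y}):\gamma\in\Gamma(\phi)\}$. A function $\nu\colon\mathcal{Y}\times\mathcal{V}\to\mathbb{R}$, $\nu_\gamma:=\nu(\cdot,\gamma)$, \emph{identifies} $\Gamma$ if for all $\phi\in\Delta(\mathcal{Y})$, $\gamma\in\mathcal{V}$: $\mathbb{E}_\phi[\nu_\gamma]=0\iff\gamma\in\Gamma(\phi)$. Available gambles: $\mathcal{G}_{\mathcal{P}}=\{g\in C(\mathcal{Y}):\sup_{\phi\in\mathcal{P}}\mathbb{E}_\phi[g]\le0\}$. *)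

theory Defs
  imports "HOL-Analysis.Analysis"
begin

text \<open>Finite outcome space: a type of class finite. C(Y) = functions 'y => real,
  ordered coordinatewise. Distributions are elements of the probability prob_simplex.\<close>

definition prob_simplex :: "('y::finite \<Rightarrow> real) set" where
  "prob_simplex = {\<phi>. (\<forall>y. 0 \<le> \<phi> y) \<and> (\<Sum>y\<in>UNIV. \<phi> y) = 1}"

definition expect :: "('y::finite \<Rightarrow> real) \<Rightarrow> ('y \<Rightarrow> real) \<Rightarrow> real" where
  "expect \<phi> f = (\<Sum>y\<in>UNIV. \<phi> y * f y)"

definition level_set :: "(('y::finite \<Rightarrow> real) \<Rightarrow> 'v set) \<Rightarrow> 'v \<Rightarrow> ('y \<Rightarrow> real) set" where
  "level_set \<Gamma> \<gamma> = {\<phi> \<in> prob_simplex. \<gamma> \<in> \<Gamma> \<phi>}"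

definition identifies :: "('y::finite \<Rightarrow> 'v \<Rightarrow> real) \<Rightarrow> (('y \<Rightarrow> real) \<Rightarrow> 'v set) \<Rightarrow> bool" where
  "identifies \<nu> \<Gamma> \<longleftrightarrow>
     (\<forall>\<phi>\<in>prob_simplex. \<forall>\<gamma>. expect \<phi> (\<lambda>y. \<nu> y \<gamma>) = 0 \<longleftrightarrow> \<gamma> \<in> \<Gamma> \<phi>)"

definition available_gambles :: "('y::finite \<Rightarrow> real) set \<Rightarrow> ('y \<Rightarrow> real) set" where
  "available_gambles P = {g. (SUP \<phi>\<in>P. expect \<phi> g) \<le> 0}"

end

theory Submission
  imports Defs
begin

lemma two_point_sum:
  fixes f :: "'y::finite \<Rightarrow> real"
  assumes "a \<noteq> b"
  shows "(\<Sum>y\<in>UNIV. (if y = a then s else if y = b then t else 0) * f y) = s * f a + t * f b"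
proof -
  have "(\<Sum>y\<in>UNIV. (if y = a then s else if y = b then t else 0) * f y)
      = (\<Sum>y\<in>UNIV. (if y = a then s * f a else 0) + (if y = b then t * f b else 0))"
    by (rule sum.cong) (use assms in auto)
  also have "\<dots> = s * f a + t * f b" by (simp add: sum.distrib)
  finally show ?thesis .
qed

lemma two_point_simplex:
  assumes "a \<noteq> b" "0 \<le> s" "0 \<le> t" "s + t = 1"
  shows "(\<lambda>y. if y = a then s else if y = b then t else 0) \<in> (prob_simplex :: ('y::finite \<Rightarrow> real) set)"
  using two_point_sum[OF assms(1), of s t "\<lambda>_. 1"] assms
  unfolding prob_simplex_def by auto

lemma one_point_simplex:
  "(\<lambda>y. if y = a then 1 else 0) \<in> (prob_simplex :: ('y::finite \<Rightarrow> real) set)"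
  unfolding prob_simplex_def by auto

lemma one_point_expect:
  "expect (\<lambda>y. if y = a then 1 else 0) (f :: 'y::finite \<Rightarrow> real) = f a"
proof -
  have "(\<Sum>y\<in>UNIV. (if y = a then 1 else 0) * f y) = (\<Sum>y\<in>UNIV. if y = a then f a else 0)"
    by (rule sum.cong) auto
  thus ?thesis unfolding expect_def by simp
qed

lemma farkas:
  fixes n g :: "'y::finite \<Rightarrow> real"
  assumes H: "\<And>\<phi>. \<phi> \<in> prob_simplex \<Longrightarrow> expect \<phi> n = 0 \<Longrightarrow> expect \<phi> g \<le> 0"
  shows "\<exists>\<alpha>. \<forall>y. g y \<le> \<alpha> * n y"
proof -
  have Z: "g y \<le> 0" if "n y = 0" for y
    using H[OF one_point_simplex[of y]] that by (simp add: one_point_expect)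
  have PN: "g p / n p \<le> g q / n q" if p: "n p > 0" and q: "n q < 0" for p q
  proof -
    have ne: "p \<noteq> q" using p q by auto
    define s where "s = - n q / (n p - n q)"
    define t where "t = n p / (n p - n q)"
    have d: "n p - n q > 0" using p q by simp
    have d': "n p - n q \<noteq> 0" using d by simp
    have st: "0 \<le> s" "0 \<le> t" "s + t = 1"
      using p q d d' unfolding s_def t_def by (auto simp: divide_simps)
    have mem: "(\<lambda>y. if y = p then s else if y = q then t else 0) \<in> prob_simplex"
      by (rule two_point_simplex[OF ne st])
    have "s * n p + t * n q = 0" unfolding s_def t_def using d by (simp add: field_simps)
    hence "s * g p + t * g q \<le> 0"
      using H[OF mem] unfolding expect_def two_point_sum[OF ne] by simp
    moreover have "s * g p + t * g q = (- n q * g p + n p * g q) / (n p - n q)"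
      unfolding s_def t_def using d' by (simp add: add_divide_distrib diff_divide_distrib)
    ultimately have "(- n q * g p + n p * g q) / (n p - n q) \<le> 0" by simp
    hence "- n q * g p + n p * g q \<le> 0"
      using d by (simp add: divide_le_0_iff)
    hence "n p * g q \<le> g p * n q" by (simp add: algebra_simps)
    thus ?thesis using p q by (simp add: field_simps)
  qed
  define P where "P = {y. n y > 0}"
  define N where "N = {y. n y < 0}"
  show ?thesis
  proof (cases "P = {}")
    case False
    define \<alpha> where "\<alpha> = Max ((\<lambda>p. g p / n p) ` P)"
    have ub: "g p / n p \<le> \<alpha>" if "p \<in> P" for p
      unfolding \<alpha>_def using that by simp
    have "\<alpha> \<in> (\<lambda>p. g p / n p) ` P"
      unfolding \<alpha>_def using False by (intro Max_in) auto
    then obtain p0 where p0: "p0 \<in> P" "\<alpha> = g p0 / n p0" by auto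
    have "g y \<le> \<alpha> * n y" for y
    proof -
      consider "n y > 0" | "n y < 0" | "n y = 0" by linarith
      thus ?thesis
      proof cases
        case 1 then show ?thesis using ub[of y] by (simp add: P_def field_simps)
      next
        case 2
        have "\<alpha> \<le> g y / n y" using p0 PN[of p0 y] 2 by (simp add: P_def)
        then show ?thesis using 2 by (simp add: field_simps)
      next
        case 3 then show ?thesis using Z by simp
      qed
    qed
    thus ?thesis by blast
  next
    case Pe: True
    show ?thesis
    proof (cases "N = {}")
      case True
      have "g y \<le> 0 * n y" for y
        using Z[of y] Pe True unfolding P_def N_def by (cases "n y = 0") (auto simp: linorder_neq_iff)
      thus ?thesis by blast
    next
      case False
      define \<alpha> where "\<alpha> = Min ((\<lambda>p. g p / n p) ` N)"
      have lb: "\<alpha> \<le> g p / n p" if "p \<in> N" for p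
        unfolding \<alpha>_def using that by simp
      have "g y \<le> \<alpha> * n y" for y
      proof -
        consider "n y > 0" | "n y < 0" | "n y = 0" by linarith
        thus ?thesis
        proof cases
          case 1 then show ?thesis using Pe by (auto simp: P_def)
        next
          case 2 then show ?thesis using lb[of y] by (simp add: N_def field_simps)
        next
          case 3 then show ?thesis using Z by simp
        qed
      qed
      thus ?thesis by blast
    qed
  qed
qed

lemma expect_bound:
  assumes "\<phi> \<in> prob_simplex"
  shows "expect \<phi> (g :: 'y::finite \<Rightarrow> real) \<le> (\<Sum>y\<in>UNIV. \<bar>g y\<bar>)"
proof -
  have le1: "\<phi> y \<le> 1" for y
  proof -
    have "\<phi> y \<le> (\<Sum>y\<in>UNIV. \<phi> y)"
      by (rule member_le_sum) (use assms in \<open>auto simp: prob_simplex_def\<close>)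
    thus ?thesis using assms by (simp add: prob_simplex_def)
  qed
  have "\<phi> y * g y \<le> \<bar>g y\<bar>" for y
  proof -
    have "\<phi> y * g y \<le> \<phi> y * \<bar>g y\<bar>"
      using assms by (intro mult_left_mono) (auto simp: prob_simplex_def)
    also have "\<dots> \<le> 1 * \<bar>g y\<bar>" by (intro mult_right_mono le1) auto
    finally show ?thesis by simp
  qed
  thus ?thesis unfolding expect_def by (intro sum_mono) auto
qed

theorem mainTheorem9:
  fixes \<Gamma> :: "('y::finite \<Rightarrow> real) \<Rightarrow> 'v set"
    and \<nu> :: "'y \<Rightarrow> 'v \<Rightarrow> real"
    and \<gamma> :: 'v
  assumes "identifies \<nu> \<Gamma>"
    and "level_set \<Gamma> \<gamma> \<noteq> {}"
  shows "{g :: 'y \<Rightarrow> real. \<exists>\<alpha>::real. \<forall>y. g y \<le> \<alpha> * \<nu> y \<gamma>}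
         = available_gambles (level_set \<Gamma> \<gamma>)"
proof -
  let ?L = "level_set \<Gamma> \<gamma>"
  have L: "\<phi> \<in> ?L \<longleftrightarrow> \<phi> \<in> prob_simplex \<and> expect \<phi> (\<lambda>y. \<nu> y \<gamma>) = 0" for \<phi>
    using assms(1) unfolding level_set_def identifies_def by auto
  show ?thesis
  proof (intro set_eqI iffI)
    fix g :: "'y \<Rightarrow> real"
    assume "g \<in> {g. \<exists>\<alpha>. \<forall>y. g y \<le> \<alpha> * \<nu> y \<gamma>}"
    then obtain \<alpha> where a: "\<forall>y. g y \<le> \<alpha> * \<nu> y \<gamma>" by auto
    have "expect \<phi> g \<le> 0" if "\<phi> \<in> ?L" for \<phi>
    proof -
      have ph: "\<phi> \<in> prob_simplex" "expect \<phi> (\<lambda>y. \<nu> y \<gamma>) = 0" using that L by auto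
      have "expect \<phi> g \<le> (\<Sum>y\<in>UNIV. \<phi> y * (\<alpha> * \<nu> y \<gamma>))"
        unfolding expect_def using ph(1) a
        by (intro sum_mono mult_left_mono) (auto simp: prob_simplex_def)
      also have "\<dots> = \<alpha> * expect \<phi> (\<lambda>y. \<nu> y \<gamma>)"
        unfolding expect_def by (simp add: sum_distrib_left algebra_simps)
      finally show ?thesis using ph by simp
    qed
    thus "g \<in> available_gambles ?L"
      unfolding available_gambles_def using assms(2) by (auto intro: cSUP_least)
  next
    fix g :: "'y \<Rightarrow> real"
    assume "g \<in> available_gambles ?L"
    hence S: "(SUP \<phi>\<in>?L. expect \<phi> g) \<le> 0" by (simp add: available_gambles_def)
    have bdd: "bdd_above ((\<lambda>\<phi>. expect \<phi> g) ` ?L)"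
      by (rule bdd_aboveI2[where M="\<Sum>y\<in>UNIV. \<bar>g y\<bar>"])
         (use L expect_bound in blast)
    have "\<exists>\<alpha>. \<forall>y. g y \<le> \<alpha> * \<nu> y \<gamma>"
    proof (rule farkas)
      fix \<phi> :: "'y \<Rightarrow> real"
      assume "\<phi> \<in> prob_simplex" "expect \<phi> (\<lambda>y. \<nu> y \<gamma>) = 0"
      hence "\<phi> \<in> ?L" using L by auto
      hence "expect \<phi> g \<le> (SUP \<phi>\<in>?L. expect \<phi> g)" using bdd by (rule cSUP_upper)
      thus "expect \<phi> g \<le> 0" using S by linarith
    qed
    thus "g \<in> {g. \<exists>\<alpha>. \<forall>y. g y \<le> \<alpha> * \<nu> y \<gamma>}" by simp
  qed
qed

end
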